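(* Let $\Phi:(\mathcal{S},g)\to(\mathcal{M},\bar g)$ be an isometric immersion of an $n$-dimensional orientable Riemannian manifold into a semi-Riemannian manifold with co-dimension $k$. For every $p\in\mathcal{S}$, the umbilical space and the shear space at $p$ satisfy $$\mathscr{U}_p=(\mathrm{Im}\,\widetilde h_p)^\perp\quad\text{and}\quad k-\dim\mathscr{U}_p=\dim\mathrm{Im}\,\widetilde h_p,$$ where $(\mathrm{Im}\,\widetilde h_p)^\perp=\{\eta_p\in T_p\mathcal{S}^\perp:\bar g(\eta_p,\xi_p)=0\ \forall\xi_p\in\mathrm{Im}\,\widetilde h_p\}$.
   Context: $g=\Phi^\star\bar g$ is positive definite. The second fundamental form $h$ is the normal part of $\overline\nabla_XY$; the shape operator $A_\xi$ of a normal vector $\xi$ satisfies $g(A_\xi X,Y)=\bar g(h(X,Y),\xi)$; $H=\frac1n\mathrm{tr}_g h$ is the mean curvature vector. The total shear tensor is $\widetilde h(X,Y)=h(X,Y)-g(X,Y)H$. The shear space at $p$ is $\mathrm{Im}\,\widetilde h_p=\mathrm{span}\{\widetilde h(v,w):v,w\in T_p\mathcal{S}\}\subseteq T_p\mathcal{S}^\perp$. The umbilical space at $p$ is $\mathscr{U}_p=\{\xi_p\in T_p\mathcal{S}^\perp: A_{\xi_p}\text{ is proportional to the identity}\}$. *)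

theory Defs
  imports "HOL-Analysis.Analysis"
begin

text \<open>Pointwise model at a fixed point p: T_pS = real^'n (dimension n = CARD('n)),
  with an arbitrary positive definite inner product g; T_pS^perp = real^'k
  (codimension k = CARD('k)) with the restriction gb of the ambient semi-Riemannian
  metric, which is symmetric, bilinear and nondegenerate (possibly indefinite).
  The second fundamental form at p is a symmetric bilinear map h : T x T -> N.\<close>

definition pos_def_form :: "('a::real_vector \<Rightarrow> 'a \<Rightarrow> real) \<Rightarrow> bool" where
  "pos_def_form g \<longleftrightarrow> bilinear g \<and> (\<forall>x y. g x y = g y x) \<and> (\<forall>x. x \<noteq> 0 \<longrightarrow> g x x > 0)"

definition nondeg_form :: "('a::real_vector \<Rightarrow> 'a \<Rightarrow> real) \<Rightarrow> bool" where
  "nondeg_form gb \<longleftrightarrow> bilinear gb \<and> (\<forall>x y. gb x y = gb y x) \<and> (\<forall>x. (\<forall>y. gb x y = 0) \<longrightarrow> x = 0)"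

definition gram_matrix :: "(real^'n \<Rightarrow> real^'n \<Rightarrow> real) \<Rightarrow> real^'n^'n" where
  "gram_matrix g = (\<chi> i j. g (axis i 1) (axis j 1))"

definition mean_curv ::
  "(real^'n \<Rightarrow> real^'n \<Rightarrow> real) \<Rightarrow> (real^'n \<Rightarrow> real^'n \<Rightarrow> 'b::real_vector) \<Rightarrow> 'b" where
  "mean_curv g h = (1 / real CARD('n)) *\<^sub>R
     (\<Sum>i\<in>UNIV. \<Sum>j\<in>UNIV. (matrix_inv (gram_matrix g) $ i $ j) *\<^sub>R h (axis i 1) (axis j 1))"

definition total_shear ::
  "(real^'n \<Rightarrow> real^'n \<Rightarrow> real) \<Rightarrow> (real^'n \<Rightarrow> real^'n \<Rightarrow> 'b::real_vector) \<Rightarrow> real^'n \<Rightarrow> real^'n \<Rightarrow> 'b" where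
  "total_shear g h X Y = h X Y - g X Y *\<^sub>R mean_curv g h"

definition shear_space ::
  "(real^'n \<Rightarrow> real^'n \<Rightarrow> real) \<Rightarrow> (real^'n \<Rightarrow> real^'n \<Rightarrow> 'b::real_vector) \<Rightarrow> 'b set" where
  "shear_space g h = span {total_shear g h v w | v w. True}"

definition shape_op ::
  "(real^'n \<Rightarrow> real^'n \<Rightarrow> real) \<Rightarrow> ('b \<Rightarrow> 'b \<Rightarrow> real) \<Rightarrow> (real^'n \<Rightarrow> real^'n \<Rightarrow> 'b) \<Rightarrow> 'b
     \<Rightarrow> (real^'n \<Rightarrow> real^'n)" where
  "shape_op g gb h \<xi> = (SOME A. linear A \<and> (\<forall>X Y. g (A X) Y = gb (h X Y) \<xi>))"

definition umbilical_space ::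
  "(real^'n \<Rightarrow> real^'n \<Rightarrow> real) \<Rightarrow> ('b \<Rightarrow> 'b \<Rightarrow> real) \<Rightarrow> (real^'n \<Rightarrow> real^'n \<Rightarrow> 'b) \<Rightarrow> 'b set" where
  "umbilical_space g gb h = {\<xi>. \<exists>c::real. shape_op g gb h \<xi> = (\<lambda>X. c *\<^sub>R X)}"

definition orth_compl :: "('b \<Rightarrow> 'b \<Rightarrow> real) \<Rightarrow> 'b set \<Rightarrow> 'b set" where
  "orth_compl gb V = {\<eta>. \<forall>\<xi>\<in>V. gb \<eta> \<xi> = 0}"

end

theory Submission
  imports Defs
begin

lemma expand1:
  fixes f :: "real^'n \<Rightarrow> 'b::real_vector"
  assumes "linear f"
  shows "f y = (\<Sum>j\<in>UNIV. y$j *\<^sub>R f (axis j 1))"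
proof -
  have "f y = f (\<Sum>j\<in>UNIV. y$j *\<^sub>R axis j 1)"
    using basis_expansion[of y] by (simp add: scalar_mult_eq_scaleR)
  also have "\<dots> = (\<Sum>j\<in>UNIV. y$j *\<^sub>R f (axis j 1))"
    using assms by (simp add: linear_sum linear_scale)
  finally show ?thesis .
qed

lemma expand2:
  fixes f :: "'a::real_vector \<Rightarrow> real^'n \<Rightarrow> 'b::real_vector"
  assumes "linear (f x)"
  shows "f x y = (\<Sum>j\<in>UNIV. y$j *\<^sub>R f x (axis j 1))"
proof -
  have "f x y = f x (\<Sum>j\<in>UNIV. y$j *\<^sub>R axis j 1)"
    using basis_expansion[of y] by (simp add: scalar_mult_eq_scaleR)
  also have "\<dots> = (\<Sum>j\<in>UNIV. y$j *\<^sub>R f x (axis j 1))"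
    using assms by (simp add: linear_sum linear_scale)
  finally show ?thesis .
qed

lemma bil_lin2: "bilinear f \<Longrightarrow> linear (f x)" by (simp add: bilinear_def)
lemma bil_lin1: "bilinear f \<Longrightarrow> linear (\<lambda>x. f x y)" by (simp add: bilinear_def)

lemma dual_map:
  fixes g :: "real^'n \<Rightarrow> real^'n \<Rightarrow> real"
  assumes bil: "bilinear g" and nd: "\<forall>x. (\<forall>y. g x y = 0) \<longrightarrow> x = 0"
  defines "G \<equiv> (\<lambda>x. \<chi> j. g x (axis j 1))"
  shows "linear G" "inj G" "\<And>x y. g x y = G x \<bullet> y"
proof -
  show lin: "linear G" unfolding G_def
    by (rule linearI) (auto simp: vec_eq_iff linear_add[OF bil_lin1[OF bil]] linear_scale[OF bil_lin1[OF bil]])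
  show gx: "\<And>x y. g x y = G x \<bullet> y"
    by (subst expand2[of g], rule bil_lin2[OF bil]) (simp add: G_def inner_vec_def mult.commute)
  show "inj G"
  proof (rule injI)
    fix x y assume "G x = G y"
    then have "G (x - y) = 0" using lin by (simp add: linear_diff)
    then have "\<forall>z. g (x - y) z = 0" using gx by simp
    then show "x = y" using nd by auto
  qed
qed


lemma gram_inv:
  fixes g :: "real^'n \<Rightarrow> real^'n \<Rightarrow> real"
  assumes "pos_def_form g"
  shows "matrix_inv (gram_matrix g) ** gram_matrix g = mat 1"
proof -
  have gbil: "bilinear g" and gsym: "\<And>x y. g x y = g y x" and gpos: "\<And>x. x \<noteq> 0 \<Longrightarrow> g x x > 0"
    using assms unfolding pos_def_form_def by auto
  have gnd: "\<forall>x. (\<forall>y. g x y = 0) \<longrightarrow> x = 0"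
  proof (intro allI impI)
    fix x assume "\<forall>y. g x y = 0"
    then have "g x x = 0" by simp
    then show "x = 0" using gpos[of x] by (cases "x = 0") auto
  qed
  define G where "G = (\<lambda>x::real^'n. \<chi> j. g x (axis j 1))"
  have Glin: "linear G" and Ginj: "inj G"
    using dual_map[OF gbil gnd] unfolding G_def by blast+
  have eq: "(*v) (gram_matrix g) = G"
  proof (rule ext)
    fix x
    show "gram_matrix g *v x = G x"
    proof (subst vec_eq_iff, rule allI)
      fix i
      have "g (axis i 1) x = (\<Sum>j\<in>UNIV. x$j *\<^sub>R g (axis i 1) (axis j 1))"
        by (rule expand1[OF bil_lin2[OF gbil]])
      then show "(gram_matrix g *v x) $ i = G x $ i"
        by (simp add: matrix_vector_mult_def gram_matrix_def G_def gsym[of x] mult.commute)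
    qed
  qed
  have "surj G" using linear_injective_imp_surjective[OF Glin Ginj refl] .
  then have "invertible (gram_matrix g)"
    unfolding invertible_eq_bij eq using Ginj by (simp add: bij_def)
  then obtain A where "gram_matrix g ** A = mat 1 \<and> A ** gram_matrix g = mat 1"
    unfolding invertible_def by blast
  then have "gram_matrix g ** matrix_inv (gram_matrix g) = mat 1 \<and> matrix_inv (gram_matrix g) ** gram_matrix g = mat 1"
    unfolding matrix_inv_def by (rule someI)
  then show ?thesis by simp
qed

lemma trace_lemma:
  fixes g :: "real^'n \<Rightarrow> real^'n \<Rightarrow> real"
    and h :: "real^'n \<Rightarrow> real^'n \<Rightarrow> 'b::real_vector"
  assumes "pos_def_form g" and L: "linear L"
    and hc: "\<And>X Y. L (h X Y) = c * g X Y"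
  shows "L (mean_curv g h) = c"
proof -
  have gsym: "\<And>x y. g x y = g y x" using assms(1) unfolding pos_def_form_def by auto
  define M where "M = matrix_inv (gram_matrix g)"
  define Gm where "Gm = gram_matrix g"
  have MG: "M ** Gm = mat 1" unfolding M_def Gm_def by (rule gram_inv[OF assms(1)])
  have "L (mean_curv g h) = (1 / real CARD('n)) *
      (\<Sum>i\<in>UNIV. \<Sum>j\<in>UNIV. M $ i $ j * L (h (axis i 1) (axis j 1)))"
    unfolding mean_curv_def M_def by (simp add: linear_scale[OF L] linear_sum[OF L])
  also have "\<dots> = (1 / real CARD('n)) * (c * (\<Sum>i\<in>UNIV. (M ** Gm) $ i $ i))"
  proof -
    have e: "L (h (axis i 1) (axis j 1)) = c * Gm $ j $ i" for i j
      using hc[of "axis i 1" "axis j 1"] gsym[of "axis i 1" "axis j 1"]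
      by (simp add: Gm_def gram_matrix_def)
    have "(\<Sum>i\<in>UNIV. \<Sum>j\<in>UNIV. M $ i $ j * L (h (axis i 1) (axis j 1)))
        = (\<Sum>i\<in>UNIV. c * (\<Sum>j\<in>UNIV. M $ i $ j * Gm $ j $ i))"
      by (simp only: e sum_distrib_left mult.left_commute)
    also have "\<dots> = c * (\<Sum>i\<in>UNIV. (M ** Gm) $ i $ i)"
      by (simp only: sum_distrib_left[symmetric] matrix_matrix_mult_def vec_lambda_beta)
    finally show ?thesis by simp
  qed
  also have "\<dots> = c"
    by (simp add: MG mat_def)
  finally show ?thesis .
qed

lemma orth_dim:
  fixes gb :: "real^'k \<Rightarrow> real^'k \<Rightarrow> real"
  assumes "nondeg_form gb" and W: "subspace W"
  shows "dim (orth_compl gb W) + dim W = CARD('k)"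
proof -
  have bbil: "bilinear gb" and bnd: "\<forall>x. (\<forall>y. gb x y = 0) \<longrightarrow> x = 0"
    using assms(1) unfolding nondeg_form_def by auto
  define B where "B = (\<lambda>x::real^'k. \<chi> j. gb x (axis j 1))"
  have Blin: "linear B" and Binj: "inj B" and Bx: "\<And>x y. gb x y = B x \<bullet> y"
    using dual_map[OF bbil bnd] unfolding B_def by blast+
  obtain Bi where Bilin: "linear Bi" and BiB: "\<And>x. Bi (B x) = x" and BBi: "\<And>x. B (Bi x) = x"
    using linear_injective_isomorphism[OF Blin Binj refl] by blast
  define P where "P = {y \<in> UNIV. \<forall>x\<in>W. orthogonal x y}"
  have "orth_compl gb W = Bi ` P"
  proof (rule set_eqI, rule iffI)
    fix x assume "x \<in> orth_compl gb W"
    then have "B x \<in> P" unfolding P_def orth_compl_def orthogonal_def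
      by (auto simp: Bx inner_commute)
    then show "x \<in> Bi ` P" using BiB[of x] by (metis image_eqI)
  next
    fix x assume "x \<in> Bi ` P"
    then obtain y where "y \<in> P" "x = Bi y" by auto
    then show "x \<in> orth_compl gb W" unfolding P_def orth_compl_def orthogonal_def
      by (auto simp: Bx BBi inner_commute)
  qed
  moreover have "inj Bi" by (metis BBi injI)
  then have "dim (Bi ` P) = dim P"
    using dim_image_eq[OF Bilin] by (metis inj_on_subset subset_UNIV)
  moreover have "dim P + dim W = dim (UNIV :: (real^'k) set)"
    unfolding P_def by (rule dim_subspace_orthogonal_to_vectors[OF W subspace_UNIV subset_UNIV])
  ultimately show ?thesis by (simp add: dim_UNIV DIM_cart)
qed

theorem proposition3p1:
  fixes g :: "real^'n \<Rightarrow> real^'n \<Rightarrow> real"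
    and gb :: "real^'k \<Rightarrow> real^'k \<Rightarrow> real"
    and h :: "real^'n \<Rightarrow> real^'n \<Rightarrow> real^'k"
  assumes "pos_def_form g"
    and "nondeg_form gb"
    and "bilinear h"
    and "\<forall>X Y. h X Y = h Y X"
  shows "umbilical_space g gb h = orth_compl gb (shear_space g h)
         \<and> CARD('k) - dim (umbilical_space g gb h) = dim (shear_space g h)"
proof -
  have gbil: "bilinear g" and gsym: "\<And>x y. g x y = g y x" and gpos: "\<And>x. x \<noteq> 0 \<Longrightarrow> g x x > 0"
    using assms(1) unfolding pos_def_form_def by auto
  have gnd: "\<forall>x. (\<forall>y. g x y = 0) \<longrightarrow> x = 0"
  proof (intro allI impI)
    fix x assume "\<forall>y. g x y = 0"
    then have "g x x = 0" by simp
    then show "x = 0" using gpos[of x] by (cases "x = 0") auto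
  qed
  have bbil: "bilinear gb" and bsym: "\<And>x y. gb x y = gb y x" and bnd: "\<forall>x. (\<forall>y. gb x y = 0) \<longrightarrow> x = 0"
    using assms(2) unfolding nondeg_form_def by auto
  have hbil: "bilinear h" by fact
  define G where "G = (\<lambda>x::real^'n. \<chi> j. g x (axis j 1))"
  have Glin: "linear G" and Ginj: "inj G" and Gx: "\<And>x y. g x y = G x \<bullet> y"
    using dual_map[OF gbil gnd] unfolding G_def by blast+
  obtain Gi where Gilin: "linear Gi" and GiG: "\<And>x. Gi (G x) = x" and GGi: "\<And>x. G (Gi x) = x"
    using linear_injective_isomorphism[OF Glin Ginj refl] by blast
  have shape_ex: "\<exists>A. linear A \<and> (\<forall>X Y. g (A X) Y = gb (h X Y) \<xi>)" for \<xi>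
  proof -
    define F where "F = (\<lambda>X. \<chi> j. gb (h X (axis j 1)) \<xi>)"
    have l1: "linear (\<lambda>z. gb z \<xi>)" using bil_lin1[OF bbil] .
    have Flin: "linear F" unfolding F_def
      by (rule linearI) (auto simp: vec_eq_iff linear_add[OF l1] linear_scale[OF l1]
            linear_add[OF bil_lin1[OF hbil]] linear_scale[OF bil_lin1[OF hbil]])
    have "g (Gi (F X)) Y = gb (h X Y) \<xi>" for X Y
    proof -
      have lin: "linear (\<lambda>Y. gb (h X Y) \<xi>)"
        using linear_compose[OF bil_lin2[OF hbil, of X] l1] by (simp add: o_def)
      have "gb (h X Y) \<xi> = (\<Sum>j\<in>UNIV. Y$j *\<^sub>R gb (h X (axis j 1)) \<xi>)"
        by (rule expand1[OF lin])
      then show ?thesis by (simp only: Gx GGi F_def inner_vec_def vec_lambda_beta real_scaleR_def inner_real_def mult.commute)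
    qed
    then show ?thesis using linear_compose[OF Flin Gilin] by (auto simp: o_def)
  qed
  have shape_prop: "linear (shape_op g gb h \<xi>) \<and> (\<forall>X Y. g (shape_op g gb h \<xi> X) Y = gb (h X Y) \<xi>)" for \<xi>
    unfolding shape_op_def by (rule someI_ex[OF shape_ex])
  have shape_unique: "shape_op g gb h \<xi> = A" if "\<forall>X Y. g (A X) Y = gb (h X Y) \<xi>" for A \<xi>
  proof
    fix X
    have "\<forall>Y. g (shape_op g gb h \<xi> X - A X) Y = 0"
      using shape_prop[of \<xi>] that by (simp add: linear_diff[OF bil_lin1[OF gbil]])
    then show "shape_op g gb h \<xi> X = A X" using gnd by auto
  qed
  have umb_iff: "\<xi> \<in> umbilical_space g gb h \<longleftrightarrow> (\<exists>c. \<forall>X Y. gb (h X Y) \<xi> = c * g X Y)" for \<xi>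
  proof
    assume "\<xi> \<in> umbilical_space g gb h"
    then obtain c where "shape_op g gb h \<xi> = (\<lambda>X. c *\<^sub>R X)" unfolding umbilical_space_def by auto
    then show "\<exists>c. \<forall>X Y. gb (h X Y) \<xi> = c * g X Y"
    proof (intro exI allI)
      fix X Y
      have "gb (h X Y) \<xi> = g (c *\<^sub>R X) Y" using shape_prop[of \<xi>] \<open>shape_op g gb h \<xi> = (\<lambda>X. c *\<^sub>R X)\<close> by simp
      also have "\<dots> = c * g X Y" by (rule linear_scale[OF bil_lin1[OF gbil], simplified])
      finally show "gb (h X Y) \<xi> = c * g X Y" .
    qed
  next
    assume "\<exists>c. \<forall>X Y. gb (h X Y) \<xi> = c * g X Y"
    then obtain c where "\<forall>X Y. gb (h X Y) \<xi> = c * g X Y" by auto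
    then have "shape_op g gb h \<xi> = (\<lambda>X. c *\<^sub>R X)"
      by (intro shape_unique) (simp add: linear_scale[OF bil_lin1[OF gbil]])
    then show "\<xi> \<in> umbilical_space g gb h" unfolding umbilical_space_def by auto
  qed
  define S where "S = {total_shear g h v w | v w. True}"
  have l1: "\<And>\<xi>. linear (\<lambda>z. gb z \<xi>)" using bil_lin1[OF bbil] .
  have ts: "gb \<xi> (total_shear g h v w) = gb (h v w) \<xi> - g v w * gb (mean_curv g h) \<xi>" for \<xi> v w
    unfolding total_shear_def
    by (simp add: bsym[of \<xi>] linear_diff[OF l1] linear_scale[OF l1])
  have orth_iff: "\<xi> \<in> orth_compl gb (shear_space g h) \<longleftrightarrow> (\<forall>v w. gb \<xi> (total_shear g h v w) = 0)" for \<xi>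
  proof
    assume "\<xi> \<in> orth_compl gb (shear_space g h)"
    then show "\<forall>v w. gb \<xi> (total_shear g h v w) = 0"
      unfolding orth_compl_def shear_space_def by (auto intro: span_base)
  next
    assume A: "\<forall>v w. gb \<xi> (total_shear g h v w) = 0"
    have sub: "subspace {x. gb \<xi> x = 0}" by (rule linear_subspace_kernel[OF bil_lin2[OF bbil]])
    show "\<xi> \<in> orth_compl gb (shear_space g h)"
      unfolding orth_compl_def shear_space_def
    proof (intro CollectI ballI)
      fix x assume "x \<in> span {total_shear g h v w | v w. True}"
      then show "gb \<xi> x = 0"
        by (rule span_induct[where P = "\<lambda>x. gb \<xi> x = 0", OF _ sub]) (use A in auto)
    qed
  qed
  have eq: "umbilical_space g gb h = orth_compl gb (shear_space g h)"
  proof (rule set_eqI)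
    fix \<xi>
    show "\<xi> \<in> umbilical_space g gb h \<longleftrightarrow> \<xi> \<in> orth_compl gb (shear_space g h)"
    proof
      assume "\<xi> \<in> umbilical_space g gb h"
      then obtain c where c: "\<forall>X Y. gb (h X Y) \<xi> = c * g X Y" using umb_iff by blast
      have "gb (mean_curv g h) \<xi> = c"
        by (rule trace_lemma[OF assms(1) l1]) (use c in blast)
      then show "\<xi> \<in> orth_compl gb (shear_space g h)"
        unfolding orth_iff ts using c by simp
    next
      assume "\<xi> \<in> orth_compl gb (shear_space g h)"
      then have "\<forall>X Y. gb (h X Y) \<xi> = gb (mean_curv g h) \<xi> * g X Y"
        unfolding orth_iff ts by simp
      then show "\<xi> \<in> umbilical_space g gb h" using umb_iff by blast
    qed
  qed
  have "dim (orth_compl gb (shear_space g h)) + dim (shear_space g h) = CARD('k)"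
    by (rule orth_dim[OF assms(2)]) (simp add: shear_space_def)
  then show ?thesis using eq by simp
qed

end
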